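(* Let $r\ge1$, $p_n\in[0,1]$, $L\ge1$, and $\mathbf s_1,\dots,\mathbf s_L\in V(G_n)_r$ with $a=|\bigcup_{j=1}^L\bar{\mathbf s}_j|$, and assume $\bar{\mathbf s}_i\cap\bigcup_{j\ne i}\bar{\mathbf s}_j\ne\emptyset$ for all $1\le i\le L$. Then $$\big|\mathbb E[Z_{\mathbf s_1}Z_{\mathbf s_2}\cdots Z_{\mathbf s_L}]-p_n^a\big|\le(2^L-1)p_n^{a+1}.$$ Moreover, for $L=2$, $\mathbb E[Z_{\mathbf s_1}Z_{\mathbf s_2}]\ge p_n^a(1-p_n)\ge0$.
   Context: $V(G_n)$ is a finite vertex set; $V(G_n)_r$ is the set of $r$-tuples of distinct elements, $\bar{\mathbf s}$ the set of entries of $\mathbf s$. $\{X_v\}_{v\in V(G_n)}$ are i.i.d. Bernoulli$(p_n)$, $X_{\mathbf s}=\prod_{u=1}^rX_{s_u}$, $Z_{\mathbf s}=X_{\mathbf s}-p_n^r$. *)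

theory Defs
  imports "HOL-Probability.Probability"
begin

text \<open>The i.i.d. Bernoulli(p) family {X_v} on the finite vertex set V, as a product pmf
  of configurations X :: 'a \<Rightarrow> bool (X v = True means X_v = 1; default False off V).\<close>
definition bern_field :: "'a set \<Rightarrow> real \<Rightarrow> ('a \<Rightarrow> bool) pmf" where
  "bern_field V p = Pi_pmf V False (\<lambda>_. bernoulli_pmf p)"

definition Xs :: "('a \<Rightarrow> bool) \<Rightarrow> 'a list \<Rightarrow> real" where
  "Xs X s = prod_list (map (\<lambda>v. of_bool (X v)) s)"

definition Zs :: "real \<Rightarrow> ('a \<Rightarrow> bool) \<Rightarrow> 'a list \<Rightarrow> real" where
  "Zs p X s = Xs X s - p ^ length s"

end

theory Submission
  imports Defs
begin

lemma fin_bf: "finite V \<Longrightarrow> finite (set_pmf (bern_field V p))"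
  unfolding bern_field_def
  by (rule finite_subset[OF set_Pi_pmf_subset'], auto)

lemma int_bf: "finite V \<Longrightarrow> integrable (measure_pmf (bern_field V p)) (f :: _ \<Rightarrow> real)"
  by (rule integrable_measure_pmf_finite[OF fin_bf])

lemma prod_of_bool: "finite A \<Longrightarrow> (\<Prod>x\<in>A. (of_bool (P x) :: real)) = of_bool (\<forall>x\<in>A. P x)"
  by (induction A rule: finite_induct) auto

lemma E_prod:
  assumes "finite V" "A \<subseteq> V" "0 \<le> p" "p \<le> 1"
  shows "measure_pmf.expectation (bern_field V p) (\<lambda>X. \<Prod>v\<in>A. (of_bool (X v) :: real)) = p ^ card A"
proof -
  have fA: "finite A" using assms finite_subset by blast
  have "(\<lambda>X. \<Prod>v\<in>A. (of_bool (X v) :: real)) = (\<lambda>X. \<Prod>v\<in>V. (\<lambda>v b. if v \<in> A then of_bool b else 1) v (X v))"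
    using assms(1,2) by (auto intro!: ext simp: prod.If_cases Int_absorb1)
  hence "measure_pmf.expectation (bern_field V p) (\<lambda>X. \<Prod>v\<in>A. (of_bool (X v) :: real))
     = (\<Prod>v\<in>V. measure_pmf.expectation (bernoulli_pmf p) (\<lambda>b. if v \<in> A then of_bool b else 1))"
    unfolding bern_field_def
    by (simp only:, subst expectation_prod_Pi_pmf) (auto intro: assms integrable_measure_pmf_finite)
  also have "\<dots> = (\<Prod>v\<in>V. if v \<in> A then p else 1)"
    using assms by (intro prod.cong) auto
  also have "\<dots> = p ^ card A"
    using assms(1,2) by (simp add: prod.If_cases Int_absorb1)
  finally show ?thesis .
qed

lemma Xs_set: "distinct s \<Longrightarrow> Xs X s = (\<Prod>v\<in>set s. of_bool (X v))"
  unfolding Xs_def by (simp add: prod.distinct_set_conv_list)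

lemma prod_Xs:
  assumes "finite T" "\<forall>j\<in>T. distinct (s j)"
  shows "(\<Prod>j\<in>T. Xs X (s j)) = (\<Prod>v\<in>(\<Union>j\<in>T. set (s j)). of_bool (X v))"
proof -
  have "(\<Prod>j\<in>T. Xs X (s j)) = (\<Prod>j\<in>T. of_bool (\<forall>v\<in>set (s j). X v))"
    using assms by (intro prod.cong) (auto simp: Xs_set prod_of_bool)
  also have "\<dots> = of_bool (\<forall>j\<in>T. \<forall>v\<in>set (s j). X v)"
    using assms by (simp add: prod_of_bool)
  also have "\<dots> = (\<Prod>v\<in>(\<Union>j\<in>T. set (s j)). of_bool (X v))"
    using assms by (subst prod_of_bool) auto
  finally show ?thesis .
qed


lemma card_UN_r:
  assumes "finite I" "\<forall>j\<in>I. card (set (s j)) = r"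
  shows "card (\<Union>j\<in>I. set (s j)) \<le> r * card I"
proof -
  have "card (\<Union>j\<in>I. set (s j)) \<le> (\<Sum>j\<in>I. card (set (s j)))"
    using assms by (intro card_UN_le) 
  also have "\<dots> = r * card I" using assms by simp
  finally show ?thesis .
qed

lemma card_strict:
  fixes L r :: nat and s :: "nat \<Rightarrow> 'a list"
  assumes len: "\<forall>j<L. length (s j) = r \<and> distinct (s j)"
    and ov: "\<forall>i<L. set (s i) \<inter> (\<Union>j\<in>{..<L} - {i}. set (s j)) \<noteq> {}"
    and S: "S \<subseteq> {..<L}" "S \<noteq> {..<L}"
  shows "card (\<Union>j<L. set (s j)) < card (\<Union>j\<in>S. set (s j)) + r * card ({..<L} - S)"
proof -
  obtain j0 where j0: "j0 < L" "j0 \<notin> S" using S by auto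
  define R where "R = (\<Union>j\<in>{..<L} - {j0}. set (s j))"
  define D where "D = {..<L} - S - {j0}"
  have crd: "\<forall>j\<in>D. card (set (s j)) = r" using len D_def by (auto simp: distinct_card)
  have all: "(\<Union>j<L. set (s j)) = set (s j0) \<union> R" using j0 R_def by auto
  have R: "R = (\<Union>j\<in>S. set (s j)) \<union> (\<Union>j\<in>D. set (s j))" using j0 S unfolding R_def D_def by auto
  have fR: "finite R" unfolding R_def by (intro finite_UN_I) auto
  have ne: "set (s j0) \<inter> R \<noteq> {}" using ov j0 R_def by auto
  have "card (set (s j0) \<union> R) + card (set (s j0) \<inter> R) = card (set (s j0)) + card R"
    using fR card_Un_Int[of "set (s j0)" R] by auto
  moreover have "card (set (s j0) \<inter> R) > 0" using ne fR by (simp add: card_gt_0_iff)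
  ultimately have 1: "card (set (s j0) \<union> R) < r + card R" using len j0 by (simp add: distinct_card)
  have "card R \<le> card (\<Union>j\<in>S. set (s j)) + card (\<Union>j\<in>D. set (s j))" unfolding R by (rule card_Un_le)
  also have "card (\<Union>j\<in>D. set (s j)) \<le> r * card D" using crd D_def by (intro card_UN_r) auto
  finally have 2: "card R \<le> card (\<Union>j\<in>S. set (s j)) + r * card D" by simp
  have "card ({..<L} - S) = Suc (card D)" unfolding D_def using j0
    by (metis card_Suc_Diff1 finite_Diff finite_lessThan lessThan_iff Diff_iff)
  thus ?thesis using 1 2 all by simp
qed


theorem lemma4p1:
  fixes V :: "'a set" and p :: real and r L :: nat and s :: "nat \<Rightarrow> 'a list"
  assumes "finite V"
    and "r \<ge> 1" and "0 \<le> p" and "p \<le> 1" and "L \<ge> 1"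
    and "\<forall>j<L. length (s j) = r \<and> distinct (s j) \<and> set (s j) \<subseteq> V"
    and "\<forall>i<L. set (s i) \<inter> (\<Union>j\<in>{..<L} - {i}. set (s j)) \<noteq> {}"
  shows "\<bar>measure_pmf.expectation (bern_field V p) (\<lambda>X. \<Prod>j<L. Zs p X (s j))
            - p ^ card (\<Union>j<L. set (s j))\<bar>
           \<le> (2 ^ L - 1) * p ^ (card (\<Union>j<L. set (s j)) + 1)
         \<and> (L = 2 \<longrightarrow>
           measure_pmf.expectation (bern_field V p) (\<lambda>X. Zs p X (s 0) * Zs p X (s 1))
             \<ge> p ^ card (\<Union>j<L. set (s j)) * (1 - p)
         \<and> p ^ card (\<Union>j<L. set (s j)) * (1 - p) \<ge> 0)"
proof -
  note fV = assms(1) and p0 = assms(3) and p1 = assms(4) and sj = assms(6) and ov = assms(7)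
  define a where "a = card (\<Union>j<L. set (s j))"
  define U where "U S = (\<Union>j\<in>S. set (s j))" for S
  define t where "t S = p ^ card (U S) * (- (p ^ r)) ^ card ({..<L} - S)" for S
  have sl: "\<forall>j<L. length (s j) = r \<and> distinct (s j)" using sj by auto
  have EX: "measure_pmf.expectation (bern_field V p) (\<lambda>X. \<Prod>j\<in>S. Xs X (s j)) = p ^ card (U S)"
    if "S \<subseteq> {..<L}" for S
  proof -
    have fS: "finite S" using that finite_subset by blast
    have "(\<lambda>X. \<Prod>j\<in>S. Xs X (s j)) = (\<lambda>X. \<Prod>v\<in>U S. of_bool (X v))"
      using that fS sj unfolding U_def by (intro ext prod_Xs) auto
    moreover have "U S \<subseteq> V" using that sj unfolding U_def by auto
    ultimately show ?thesis using E_prod[OF fV _ p0 p1] by simp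
  qed
  have expand: "(\<Prod>j<L. Zs p X (s j)) = (\<Sum>S\<in>Pow {..<L}. (\<Prod>j\<in>S. Xs X (s j)) * (- (p ^ r)) ^ card ({..<L} - S))" for X
  proof -
    have "(\<Prod>j<L. Zs p X (s j)) = (\<Prod>j<L. Xs X (s j) + (- (p ^ r)))"
      using sj by (intro prod.cong) (auto simp: Zs_def)
    also have "\<dots> = (\<Sum>S\<in>Pow {..<L}. (\<Prod>j\<in>S. Xs X (s j)) * (\<Prod>j\<in>{..<L} - S. - (p ^ r)))"
      by (rule prod_add) simp
    finally show ?thesis by simp
  qed
  have E1: "measure_pmf.expectation (bern_field V p) (\<lambda>X. \<Prod>j<L. Zs p X (s j)) = (\<Sum>S\<in>Pow {..<L}. t S)"
    unfolding expand t_def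
    by (subst Bochner_Integration.integral_sum[OF int_bf[OF fV]], rule sum.cong[OF refl],
        subst integral_mult_left_zero, simp add: EX)
  have fP: "finite (Pow {..<L::nat})" by simp
  have split: "(\<Sum>S\<in>Pow {..<L}. t S) = t {..<L} + (\<Sum>S\<in>Pow {..<L} - {{..<L}}. t S)"
    using fP by (subst sum.remove[of _ "{..<L}"]) auto
  have tL: "t {..<L} = p ^ a" unfolding t_def U_def a_def by simp
  have tb: "\<bar>t S\<bar> \<le> p ^ (a + 1)" if "S \<in> Pow {..<L} - {{..<L}}" for S
  proof -
    have lt: "a < card (U S) + r * card ({..<L} - S)"
      using card_strict[OF sl ov, of S] that unfolding a_def U_def by auto
    have "\<bar>t S\<bar> = p ^ (card (U S) + r * card ({..<L} - S))"
      unfolding t_def using p0 by (simp add: abs_mult power_abs power_add power_mult)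
    also have "\<dots> \<le> p ^ (a + 1)" using lt p0 p1 by (intro power_decreasing) auto
    finally show ?thesis .
  qed
  have "\<bar>\<Sum>S\<in>Pow {..<L} - {{..<L}}. t S\<bar> \<le> (\<Sum>S\<in>Pow {..<L} - {{..<L}}. \<bar>t S\<bar>)"
    by (rule sum_abs)
  also have "\<dots> \<le> (\<Sum>S\<in>Pow {..<L} - {{..<L}}. p ^ (a + 1))" by (intro sum_mono tb)
  also have "\<dots> = real (2 ^ L - 1) * p ^ (a + 1)"
    by (simp add: card_Diff_singleton card_Pow)
  also have "real (2 ^ L - 1) = 2 ^ L - 1"
    by (simp add: of_nat_diff)
  finally have part1: "\<bar>measure_pmf.expectation (bern_field V p) (\<lambda>X. \<Prod>j<L. Zs p X (s j)) - p ^ a\<bar>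
      \<le> (2 ^ L - 1) * p ^ (a + 1)"
    using E1 split tL by simp
  have part2: "measure_pmf.expectation (bern_field V p) (\<lambda>X. Zs p X (s 0) * Zs p X (s 1))
             \<ge> p ^ a * (1 - p)" if L2: "L = 2"
  proof -
    have "(\<lambda>X. Zs p X (s 0) * Zs p X (s 1)) = (\<lambda>X. \<Prod>j<L. Zs p X (s j))"
      using L2 by (simp add: numeral_2_eq_2 lessThan_Suc mult.commute)
    hence "measure_pmf.expectation (bern_field V p) (\<lambda>X. Zs p X (s 0) * Zs p X (s 1)) = (\<Sum>S\<in>Pow {..<L}. t S)"
      using E1 by simp
    also have "\<dots> = p ^ a - p ^ (2 * r)"
    proof -
      have "Pow {..<L} = {{}, {0}, {Suc 0}, {0, Suc 0}}" using L2
        by (auto simp: numeral_2_eq_2 lessThan_Suc Pow_insert)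
      moreover have "card (U {0}) = r" "card (U {Suc 0}) = r" "card (U {0, Suc 0}) = a"
        using sl L2 unfolding U_def a_def by (auto simp: distinct_card numeral_2_eq_2 lessThan_Suc insert_commute)
      ultimately show ?thesis using L2 unfolding t_def U_def
        by (simp add: numeral_2_eq_2 lessThan_Suc insert_Diff_if power_mult power2_eq_square power_add)
    qed
    finally have eqE: "measure_pmf.expectation (bern_field V p) (\<lambda>X. Zs p X (s 0) * Zs p X (s 1)) = p ^ a - p ^ (2 * r)" .
    have le: "p ^ (2 * r) \<le> p ^ (a + 1)"
    proof -
      have ne: "{} \<noteq> {..<L}" using L2 by (metis empty_iff lessThan_iff zero_less_numeral)
      have "a < card (U {}) + r * card ({..<L} - {})"
        using card_strict[OF sl ov _ ne] unfolding a_def U_def by simp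
      hence "a + 1 \<le> 2 * r" using L2 unfolding U_def by simp
      thus ?thesis using p0 p1 by (intro power_decreasing) auto
    qed
    show ?thesis using eqE le by (simp add: algebra_simps)
  qed
  have "p ^ a * (1 - p) \<ge> 0" using p0 p1 by simp
  thus ?thesis using part1 part2 unfolding a_def by auto
qed

end
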